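(* The one-dimensional subalgebras of ${\rm A}_5$ are exactly $\langle e_1\rangle$, $\langle e_2\rangle$ and $\langle e_1+\alpha e_2\pm e_3\rangle$ ($\alpha\in\mathbb{C}$). Up to automorphisms of ${\rm A}_5$, every one-dimensional subalgebra is equivalent to one of $\langle e_1\rangle$, $\langle e_2\rangle$, $\langle e_1+e_3\rangle$, $\langle e_1-e_3\rangle$.
   Context: ${\rm A}_5$ is the complex algebra with basis $e_1,e_2,e_3$, unit $e_1$ ($e_1e_i=e_ie_1=e_i$), $e_2e_3=e_2$, $e_3e_2=-e_2$, $e_3e_3=e_1$; all other products of basis elements are zero. A subalgebra is a linear subspace closed under multiplication (it need not contain $e_1$). Equivalence up to automorphisms means one is mapped onto the other by an algebra automorphism. $\langle S\rangle$ denotes linear span. *)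

theory Defs
  imports Complex_Main
begin

type_synonym a5 = "complex \<times> complex \<times> complex"

definition e1 :: a5 where "e1 = (1, 0, 0)"
definition e2 :: a5 where "e2 = (0, 1, 0)"
definition e3 :: a5 where "e3 = (0, 0, 1)"

definition a5_add :: "a5 \<Rightarrow> a5 \<Rightarrow> a5" where
  "a5_add x y = (case x of (a1,a2,a3) \<Rightarrow> case y of (b1,b2,b3) \<Rightarrow> (a1+b1, a2+b2, a3+b3))"

definition a5_scale :: "complex \<Rightarrow> a5 \<Rightarrow> a5" where
  "a5_scale c x = (case x of (a1,a2,a3) \<Rightarrow> (c*a1, c*a2, c*a3))"

text \<open>Bilinear extension of: e1 unit, e2 e3 = e2, e3 e2 = -e2, e3 e3 = e1, other products 0.\<close>
definition a5_mult :: "a5 \<Rightarrow> a5 \<Rightarrow> a5" where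
  "a5_mult x y = (case x of (a1,a2,a3) \<Rightarrow> case y of (b1,b2,b3) \<Rightarrow>
     (a1*b1 + a3*b3, a1*b2 + a2*b1 + a2*b3 - a3*b2, a1*b3 + a3*b1))"

definition a5_subspace :: "a5 set \<Rightarrow> bool" where
  "a5_subspace S \<longleftrightarrow> (0,0,0) \<in> S \<and> (\<forall>x\<in>S. \<forall>y\<in>S. a5_add x y \<in> S)
      \<and> (\<forall>c. \<forall>x\<in>S. a5_scale c x \<in> S)"

definition a5_subalgebra :: "a5 set \<Rightarrow> bool" where
  "a5_subalgebra S \<longleftrightarrow> a5_subspace S \<and> (\<forall>x\<in>S. \<forall>y\<in>S. a5_mult x y \<in> S)"

definition a5_line :: "a5 \<Rightarrow> a5 set" where
  "a5_line v = {a5_scale c v | c. True}"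

definition a5_one_dim :: "a5 set \<Rightarrow> bool" where
  "a5_one_dim S \<longleftrightarrow> (\<exists>v. v \<noteq> (0,0,0) \<and> S = a5_line v)"

definition a5_automorphism :: "(a5 \<Rightarrow> a5) \<Rightarrow> bool" where
  "a5_automorphism f \<longleftrightarrow> bij f
     \<and> (\<forall>x y. f (a5_add x y) = a5_add (f x) (f y))
     \<and> (\<forall>c x. f (a5_scale c x) = a5_scale c (f x))
     \<and> (\<forall>x y. f (a5_mult x y) = a5_mult (f x) (f y))"

end

theory Submission
  imports Defs
begin

lemma line_mem: "x \<in> a5_line v \<longleftrightarrow> (\<exists>c. x = a5_scale c v)"
  by (auto simp: a5_line_def)

lemma scale_scale: "a5_scale a (a5_scale b v) = a5_scale (a*b) v"
  by (cases v) (auto simp: a5_scale_def)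

lemma line_scale: "c \<noteq> 0 \<Longrightarrow> a5_line (a5_scale c w) = a5_line w"
proof -
  assume c: "c \<noteq> 0"
  have "a5_scale (d / c) (a5_scale c w) = a5_scale d w" for d
    using c by (simp add: scale_scale)
  then show ?thesis unfolding a5_line_def using scale_scale by metis
qed

lemma line_subalg:
  assumes "a5_mult v v = a5_scale l v"
  shows "a5_subalgebra (a5_line v)"
proof -
  obtain p q r where v: "v = (p,q,r)" by (cases v) auto
  have bil: "a5_mult (a5_scale a x) (a5_scale b y) = a5_scale (a*b) (a5_mult x y)" for a b x y
    by (cases x; cases y) (simp add: a5_mult_def a5_scale_def algebra_simps)
  have m: "a5_mult (a5_scale a v) (a5_scale b v) = a5_scale (a*b*l) v" for a b
    unfolding bil assms scale_scale by (simp add: mult.assoc)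
  have add: "a5_add (a5_scale a v) (a5_scale b v) = a5_scale (a+b) v" for a b
    unfolding v a5_add_def a5_scale_def by (simp add: algebra_simps)
  have z: "(0,0,0) = a5_scale 0 v" unfolding v a5_scale_def by simp
  have c1: "\<forall>x\<in>a5_line v. \<forall>y\<in>a5_line v. a5_mult x y \<in> a5_line v"
    unfolding Ball_def line_mem using m by blast
  have c2: "\<forall>x\<in>a5_line v. \<forall>y\<in>a5_line v. a5_add x y \<in> a5_line v"
    unfolding Ball_def line_mem using add by blast
  have c3: "\<forall>c. \<forall>x\<in>a5_line v. a5_scale c x \<in> a5_line v"
    unfolding Ball_def line_mem using scale_scale by blast
  have c4: "(0,0,0) \<in> a5_line v" unfolding line_mem using z by blast
  show ?thesis unfolding a5_subalgebra_def a5_subspace_def using c1 c2 c3 c4 by blast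
qed

lemma nz_dim: "v \<noteq> (0,0,0) \<Longrightarrow> a5_one_dim (a5_line v)"
  unfolding a5_one_dim_def by blast

definition T :: "complex \<Rightarrow> a5 \<Rightarrow> a5" where
  "T g x = (case x of (a,b,c) \<Rightarrow> (a, b + g*c, c))"

lemma T_aut: "a5_automorphism (T g)"
proof -
  have inv: "T (-g) (T g x) = x" "T g (T (-g) x) = x" for x
    by (cases x; auto simp: T_def)+
  have "bij (T g)" by (metis bijI' inv)
  moreover have "\<forall>x y. T g (a5_add x y) = a5_add (T g x) (T g y)"
    by (auto simp: T_def a5_add_def algebra_simps)
  moreover have "\<forall>c x. T g (a5_scale c x) = a5_scale c (T g x)"
    by (auto simp: T_def a5_scale_def algebra_simps)
  moreover have "\<forall>x y. T g (a5_mult x y) = a5_mult (T g x) (T g y)"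
    by (auto simp: T_def a5_mult_def algebra_simps)
  ultimately show ?thesis unfolding a5_automorphism_def by blast
qed

lemma T_line: "T g ` a5_line v = a5_line (T g v)"
proof -
  have "T g (a5_scale c v) = a5_scale c (T g v)" for c
    by (cases v) (auto simp: T_def a5_scale_def algebra_simps)
  moreover have "\<And>w. a5_line w = range (\<lambda>c. a5_scale c w)" unfolding a5_line_def by auto
  ultimately show ?thesis by (simp add: image_image)
qed

lemma classify:
  assumes "a5_subalgebra (a5_line v)" "v \<noteq> (0,0,0)"
  shows "a5_line v = a5_line e1 \<or> a5_line v = a5_line e2 \<or>
     (\<exists>\<alpha>. a5_line v = a5_line (a5_add (a5_add e1 (a5_scale \<alpha> e2)) e3)) \<or>
     (\<exists>\<alpha>. a5_line v = a5_line (a5_add (a5_add e1 (a5_scale \<alpha> e2)) (a5_scale (-1) e3)))"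
proof -
  obtain a b c where v: "v = (a,b,c)" by (cases v) auto
  have "v \<in> a5_line v" unfolding line_mem by (rule exI[of _ 1]) (simp add: v a5_scale_def)
  then have "a5_mult v v \<in> a5_line v" using assms(1) unfolding a5_subalgebra_def by blast
  then obtain l where l: "a5_mult v v = a5_scale l v" unfolding line_mem by blast
  then have eq1: "a*a + c*c = l*a" and eq2: "2*a*b = l*b" and eq3: "2*a*c = l*c"
    unfolding v a5_mult_def a5_scale_def by (auto simp: algebra_simps)
  show ?thesis
  proof (cases "a = 0")
    case True
    then have "c = 0" using eq1 by simp
    then have "b \<noteq> 0" using assms(2) True v by auto
    have "v = a5_scale b e2" using True \<open>c = 0\<close> by (simp add: v a5_scale_def e2_def)
    then show ?thesis using line_scale \<open>b \<noteq> 0\<close> by metis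
  next
    case False
    show ?thesis
    proof (cases "l = 2*a")
      case True
      then have "c*c = a*a" using eq1 by (simp add: algebra_simps power2_eq_square)
      then have "(c - a)*(c + a) = 0" by (simp add: algebra_simps)
      then have "c = a \<or> c = -a" by (simp add: eq_neg_iff_add_eq_0)
      then show ?thesis
      proof
        assume "c = a"
        have "v = a5_scale a (a5_add (a5_add e1 (a5_scale (b/a) e2)) e3)"
          using False \<open>c = a\<close> by (simp add: v a5_scale_def a5_add_def e1_def e2_def e3_def)
        then show ?thesis using line_scale False by metis
      next
        assume "c = -a"
        have "v = a5_scale a (a5_add (a5_add e1 (a5_scale (b/a) e2)) (a5_scale (-1) e3))"
          using False \<open>c = -a\<close> by (simp add: v a5_scale_def a5_add_def e1_def e2_def e3_def)
        then show ?thesis using line_scale False by metis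
      qed
    next
      case ne: False
      have "b = 0" using eq2 ne by (metis mult.commute mult_right_cancel)
      have "c = 0" using eq3 ne by (metis mult.commute mult_right_cancel)
      have "v = a5_scale a e1" using \<open>b = 0\<close> \<open>c = 0\<close> by (simp add: v a5_scale_def e1_def)
      then show ?thesis using line_scale False by metis
    qed
  qed
qed

theorem mainTheorem12:
  shows "(\<forall>S. (a5_subalgebra S \<and> a5_one_dim S) \<longleftrightarrow>
            (S = a5_line e1 \<or> S = a5_line e2 \<or>
             (\<exists>\<alpha>. S = a5_line (a5_add (a5_add e1 (a5_scale \<alpha> e2)) e3)) \<or>
             (\<exists>\<alpha>. S = a5_line (a5_add (a5_add e1 (a5_scale \<alpha> e2)) (a5_scale (-1) e3)))))
       \<and> (\<forall>S. a5_subalgebra S \<and> a5_one_dim S \<longrightarrow>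
            (\<exists>f. a5_automorphism f \<and>
               (f ` S = a5_line e1 \<or> f ` S = a5_line e2 \<or>
                f ` S = a5_line (a5_add e1 e3) \<or> f ` S = a5_line (a5_add e1 (a5_scale (-1) e3)))))"
proof -
  have bwd: "a5_subalgebra S \<and> a5_one_dim S" if h:
    "S = a5_line e1 \<or> S = a5_line e2 \<or>
             (\<exists>\<alpha>. S = a5_line (a5_add (a5_add e1 (a5_scale \<alpha> e2)) e3)) \<or>
             (\<exists>\<alpha>. S = a5_line (a5_add (a5_add e1 (a5_scale \<alpha> e2)) (a5_scale (-1) e3)))" for S
  proof -
    have A: "a5_subalgebra (a5_line e1) \<and> a5_one_dim (a5_line e1)"
      using line_subalg[of e1 1] nz_dim[of e1] by (simp add: e1_def a5_mult_def a5_scale_def)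
    have B: "a5_subalgebra (a5_line e2) \<and> a5_one_dim (a5_line e2)"
      using line_subalg[of e2 0] nz_dim[of e2] by (simp add: e2_def a5_mult_def a5_scale_def)
    have C: "a5_subalgebra (a5_line (a5_add (a5_add e1 (a5_scale \<alpha> e2)) e3)) \<and>
        a5_one_dim (a5_line (a5_add (a5_add e1 (a5_scale \<alpha> e2)) e3))" for \<alpha>
      using line_subalg[of "(1,\<alpha>,1)" 2] nz_dim[of "(1,\<alpha>,1)"]
      by (simp add: e1_def e2_def e3_def a5_add_def a5_mult_def a5_scale_def)
    have D: "a5_subalgebra (a5_line (a5_add (a5_add e1 (a5_scale \<alpha> e2)) (a5_scale (-1) e3))) \<and>
        a5_one_dim (a5_line (a5_add (a5_add e1 (a5_scale \<alpha> e2)) (a5_scale (-1) e3)))" for \<alpha>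
      using line_subalg[of "(1,\<alpha>,-1)" 2] nz_dim[of "(1,\<alpha>,-1)"]
      by (simp add: e1_def e2_def e3_def a5_add_def a5_mult_def a5_scale_def)
    show ?thesis using h A B C D by blast
  qed
  have fwd: "S = a5_line e1 \<or> S = a5_line e2 \<or>
             (\<exists>\<alpha>. S = a5_line (a5_add (a5_add e1 (a5_scale \<alpha> e2)) e3)) \<or>
             (\<exists>\<alpha>. S = a5_line (a5_add (a5_add e1 (a5_scale \<alpha> e2)) (a5_scale (-1) e3)))"
    if h1: "a5_subalgebra S" and h2: "a5_one_dim S" for S
  proof -
    obtain v where v: "v \<noteq> (0,0,0)" "S = a5_line v" using h2 unfolding a5_one_dim_def by blast
    show ?thesis using classify[of v] v h1 by simp
  qed
  have aut: "\<exists>f. a5_automorphism f \<and>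
               (f ` S = a5_line e1 \<or> f ` S = a5_line e2 \<or>
                f ` S = a5_line (a5_add e1 e3) \<or> f ` S = a5_line (a5_add e1 (a5_scale (-1) e3)))"
    if "a5_subalgebra S" "a5_one_dim S" for S
  proof -
    have T0: "T 0 = id" by (rule ext) (auto simp: T_def)
    from fwd[OF that] show ?thesis
    proof (elim disjE exE)
      assume "S = a5_line e1" then show ?thesis using T_aut[of 0] unfolding T0 by auto
    next
      assume "S = a5_line e2" then show ?thesis using T_aut[of 0] unfolding T0 by auto
    next
      fix \<alpha> assume S: "S = a5_line (a5_add (a5_add e1 (a5_scale \<alpha> e2)) e3)"
      have "T (-\<alpha>) (a5_add (a5_add e1 (a5_scale \<alpha> e2)) e3) = a5_add e1 e3"
        by (simp add: T_def e1_def e2_def e3_def a5_add_def a5_scale_def)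
      then have "T (-\<alpha>) ` S = a5_line (a5_add e1 e3)" using S T_line by simp
      then show ?thesis using T_aut[of "-\<alpha>"] by blast
    next
      fix \<alpha> assume S: "S = a5_line (a5_add (a5_add e1 (a5_scale \<alpha> e2)) (a5_scale (-1) e3))"
      have "T \<alpha> (a5_add (a5_add e1 (a5_scale \<alpha> e2)) (a5_scale (-1) e3)) = a5_add e1 (a5_scale (-1) e3)"
        by (simp add: T_def e1_def e2_def e3_def a5_add_def a5_scale_def)
      then have "T \<alpha> ` S = a5_line (a5_add e1 (a5_scale (-1) e3))" using S T_line by simp
      then show ?thesis using T_aut[of "\<alpha>"] by blast
    qed
  qed
  have P1: "(a5_subalgebra S \<and> a5_one_dim S) \<longleftrightarrow>
            (S = a5_line e1 \<or> S = a5_line e2 \<or>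
             (\<exists>\<alpha>. S = a5_line (a5_add (a5_add e1 (a5_scale \<alpha> e2)) e3)) \<or>
             (\<exists>\<alpha>. S = a5_line (a5_add (a5_add e1 (a5_scale \<alpha> e2)) (a5_scale (-1) e3))))" for S
  proof (rule iffI)
    assume "a5_subalgebra S \<and> a5_one_dim S" then show "S = a5_line e1 \<or> S = a5_line e2 \<or>
             (\<exists>\<alpha>. S = a5_line (a5_add (a5_add e1 (a5_scale \<alpha> e2)) e3)) \<or>
             (\<exists>\<alpha>. S = a5_line (a5_add (a5_add e1 (a5_scale \<alpha> e2)) (a5_scale (-1) e3)))"
      using fwd by blast
  next
    assume "S = a5_line e1 \<or> S = a5_line e2 \<or>
             (\<exists>\<alpha>. S = a5_line (a5_add (a5_add e1 (a5_scale \<alpha> e2)) e3)) \<or>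
             (\<exists>\<alpha>. S = a5_line (a5_add (a5_add e1 (a5_scale \<alpha> e2)) (a5_scale (-1) e3)))"
    then show "a5_subalgebra S \<and> a5_one_dim S" by (rule bwd)
  qed
  have P2: "a5_subalgebra S \<and> a5_one_dim S \<longrightarrow> (\<exists>f. a5_automorphism f \<and>
               (f ` S = a5_line e1 \<or> f ` S = a5_line e2 \<or>
                f ` S = a5_line (a5_add e1 e3) \<or> f ` S = a5_line (a5_add e1 (a5_scale (-1) e3))))" for S
    using aut by blast
  show ?thesis by (rule conjI; rule allI) (rule P1, rule P2)
qed

end
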